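(* Let $(Q,\cdot)$ be a left modular magma with a right unit $e$, and let $(Q,\ast)$ be a right modular magma with a left unit $\hat{e}$. Then $(Q,\cdot,\ast)$ is a double magma, i.e. $(x\cdot y)\ast(z\cdot w)=(x\ast z)\cdot(y\ast w)$ for all $x,y,z,w\in Q$, if and only if there is an involutive automorphism $\alpha$ of $(Q,\ast)$ such that $x\ast y=y\cdot\alpha x$ for all $x,y\in Q$.
   Context: A magma $(Q,\cdot)$ is left modular if $x(yz)=z(yx)$ and right modular if $(xy)z=(zy)x$ for all $x,y,z\in Q$. A right unit is an element $r$ with $xr=x$ for all $x$; a left unit is an element $l$ with $lx=x$ for all $x$. A mapping $\alpha:Q\to Q$ is involutive if $\alpha\circ\alpha$ is the identity map. *)

theory Defs
  imports Main
begin

definition left_modular :: "('a \<Rightarrow> 'a \<Rightarrow> 'a) \<Rightarrow> bool" where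
  "left_modular m \<longleftrightarrow> (\<forall>x y z. m x (m y z) = m z (m y x))"

definition right_modular :: "('a \<Rightarrow> 'a \<Rightarrow> 'a) \<Rightarrow> bool" where
  "right_modular m \<longleftrightarrow> (\<forall>x y z. m (m x y) z = m (m z y) x)"

definition right_unit :: "('a \<Rightarrow> 'a \<Rightarrow> 'a) \<Rightarrow> 'a \<Rightarrow> bool" where
  "right_unit m r \<longleftrightarrow> (\<forall>x. m x r = x)"

definition left_unit :: "('a \<Rightarrow> 'a \<Rightarrow> 'a) \<Rightarrow> 'a \<Rightarrow> bool" where
  "left_unit m l \<longleftrightarrow> (\<forall>x. m l x = x)"

definition automorphism :: "('a \<Rightarrow> 'a \<Rightarrow> 'a) \<Rightarrow> ('a \<Rightarrow> 'a) \<Rightarrow> bool" where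
  "automorphism m \<alpha> \<longleftrightarrow> bij \<alpha> \<and> (\<forall>x y. \<alpha> (m x y) = m (\<alpha> x) (\<alpha> y))"

definition involutive :: "('a \<Rightarrow> 'a) \<Rightarrow> bool" where
  "involutive \<alpha> \<longleftrightarrow> \<alpha> \<circ> \<alpha> = id"

definition double_magma :: "('a \<Rightarrow> 'a \<Rightarrow> 'a) \<Rightarrow> ('a \<Rightarrow> 'a \<Rightarrow> 'a) \<Rightarrow> bool" where
  "double_magma dot ast \<longleftrightarrow>
     (\<forall>x y z w. ast (dot x y) (dot z w) = dot (ast x z) (ast y w))"

end

theory Submission
  imports Defs
begin

lemma fwd: fixes m :: "'a \<Rightarrow> 'a \<Rightarrow> 'a" and s :: "'a \<Rightarrow> 'a \<Rightarrow> 'a"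
 assumes lm: "\<And>x y z. m x (m y z) = m z (m y x)" and ru: "\<And>x. m x e = x"
 and rm: "\<And>x y z. s (s x y) z = s (s z y) x" and lu: "\<And>x. s e' x = x"
 and dm: "\<And>x y z w. s (m x y) (m z w) = m (s x z) (s y w)"
 and ad: "\<And>x. a x = m e (s x e)"
 shows "s x y = m y (a x)" and "a (a x) = x"
   and "a (s x y) = s (a x) (a y)"
proof -
  have f1: "\<And>x y. s x y = m y (a x)" unfolding ad by (metis lm lu dm ru)
  have f2: "\<And>x. a (a x) = x" unfolding ad by (metis lm rm lu dm ru)
  have L: "\<And>x y. m e (m y x) = m x y" by (metis lm ru)
  have h: "\<And>y. a (s e y) = a y" by (metis f2 lu ru rm dm f1)
  show "s x y = m y (a x)" by (rule f1)
  show "a (a x) = x" by (rule f2)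
  have "a (s x y) = m e (s (s x y) e)" by (rule ad)
  also have "\<dots> = m e (s (s e y) x)" by (simp add: rm)
  also have "\<dots> = m e (m x (a (s e y)))" by (simp add: f1)
  also have "\<dots> = m (a y) x" by (simp add: L h)
  also have "\<dots> = s (a x) (a y)" by (simp add: f1 f2)
  finally show "a (s x y) = s (a x) (a y)" .
qed

lemma bwd: fixes m :: "'a \<Rightarrow> 'a \<Rightarrow> 'a" and s :: "'a \<Rightarrow> 'a \<Rightarrow> 'a"
 assumes lm: "\<And>x y z. m x (m y z) = m z (m y x)" and ru: "\<And>x. m x e = x"
 and rm: "\<And>x y z. s (s x y) z = s (s z y) x" and lu: "\<And>x. s e' x = x"
 and al: "\<And>x y. a (s x y) = s (a x) (a y)" and inv: "\<And>x. a (a x) = x"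
 and d: "\<And>x y. s x y = m y (a x)"
 shows "s (m x y) (m z w) = m (s x z) (s y w)"
  by (metis lm lu d al inv)

theorem theorem5p4:
  fixes dot :: "'a \<Rightarrow> 'a \<Rightarrow> 'a" and ast :: "'a \<Rightarrow> 'a \<Rightarrow> 'a" and e e' :: 'a
  assumes "left_modular dot" and "right_unit dot e"
    and "right_modular ast" and "left_unit ast e'"
  shows "double_magma dot ast \<longleftrightarrow>
         (\<exists>\<alpha>. automorphism ast \<alpha> \<and> involutive \<alpha> \<and> (\<forall>x y. ast x y = dot y (\<alpha> x)))"
proof -
  have lm: "\<And>x y z. dot x (dot y z) = dot z (dot y x)" using assms(1) unfolding left_modular_def by blast
  have ru: "\<And>x. dot x e = x" using assms(2) unfolding right_unit_def by blast
  have rm: "\<And>x y z. ast (ast x y) z = ast (ast z y) x" using assms(3) unfolding right_modular_def by blast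
  have lu: "\<And>x. ast e' x = x" using assms(4) unfolding left_unit_def by blast
  show ?thesis
  proof
    assume dm0: "double_magma dot ast"
    have dm: "\<And>x y z w. ast (dot x y) (dot z w) = dot (ast x z) (ast y w)"
      using dm0 unfolding double_magma_def by simp
    define a where "a = (\<lambda>x. dot e (ast x e))"
    have ad: "\<And>x. a x = dot e (ast x e)" unfolding a_def by simp
    have f1: "\<And>x y. ast x y = dot y (a x)" by (rule fwd(1)[of dot e ast e' a, OF lm ru rm lu dm ad])
    have f2: "\<And>x. a (a x) = x" by (rule fwd(2)[of dot e ast e' a, OF lm ru rm lu dm ad])
    have f3: "\<And>x y. a (ast x y) = ast (a x) (a y)" by (rule fwd(3)[of dot e ast e' a, OF lm ru rm lu dm ad])
    have inv: "involutive a" unfolding involutive_def using f2 by (simp add: fun_eq_iff)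
    have aa: "a \<circ> a = id" using inv unfolding involutive_def .
    have bij: "bij a" by (rule o_bij[OF aa aa])
    have "automorphism ast a" unfolding automorphism_def using bij f3 by simp
    moreover have "\<forall>x y. ast x y = dot y (a x)" using f1 by simp
    ultimately show "\<exists>\<alpha>. automorphism ast \<alpha> \<and> involutive \<alpha> \<and> (\<forall>x y. ast x y = dot y (\<alpha> x))"
      using inv by (intro exI[of _ a] conjI)
  next
    assume "\<exists>\<alpha>. automorphism ast \<alpha> \<and> involutive \<alpha> \<and> (\<forall>x y. ast x y = dot y (\<alpha> x))"
    then obtain a where h: "automorphism ast a" "involutive a" "\<forall>x y. ast x y = dot y (a x)" by blast
    have inv: "\<And>x. a (a x) = x" using h(2) unfolding involutive_def by (simp add: fun_eq_iff)
    have al: "\<And>x y. a (ast x y) = ast (a x) (a y)" using h(1) unfolding automorphism_def by blast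
    have d: "\<And>x y. ast x y = dot y (a x)" using h(3) by simp
    show "double_magma dot ast" unfolding double_magma_def
      by (intro allI) (rule bwd[of dot e ast e' a, OF lm ru rm lu al inv d])
  qed
qed

end
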